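(* Let $(X_1,\dots,X_M)$ have density $f\in\mathrm{MMEam}$ of the form $f(x_1,\dots,x_M)=\sum_{\mathbf i\in\mathscr S}p_{\mathbf i}f_{i_1}(x_1)\cdots f_{i_M}(x_M)$. For $1\le j\le M$, let $X^{\mathrm{OS}}_{j:M}$ be the $j$-th smallest of $X_1,\dots,X_M$ and $f^{\mathrm{OS}}_{j:M}$ its density. Then $f^{\mathrm{OS}}_{j:M}\in\mathrm{MEam}$ for each $j\in\{1,\dots,M\}$.
   Context: An ME density is a probability density on $[0,\infty)$ of the form $g(x)=\alpha e^{Tx}t$ ($\alpha$ real row vector, $T$ real square matrix, $t$ real column vector). $\mathrm{MEam}$ is the class of nonnegative functions $\sum_{k=1}^K c_kg_k$ with $g_k$ ME densities, $c_k\in\mathbb R$, $\sum c_k=1$. MMEam: fix $L,M\in\mathbb N_+$ and ME densities $f_1,\dots,f_L$. Let $\mathscr S=\{1,\dots,L\}^M$, $\mathbf i=(i_1,\dots,i_M)$, and real numbers $p_{\mathbf i}$ (possibly negative) with $\sum p_{\mathbf i}=1$; $f(x)=\sum_{\mathbf i}p_{\mathbf i}f_{i_1}(x_1)\cdots f_{i_M}(x_M)$ on $[0,\infty)^M$ is an MMEam density if $f\ge0$. *)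

theory Defs
  imports "HOL-Probability.Probability" "Jordan_Normal_Form.Matrix"
begin

definition mat_exp :: "real mat \<Rightarrow> real mat" where
  "mat_exp A = mat (dim_row A) (dim_col A) (\<lambda>(i,j). \<Sum>k. (A ^\<^sub>m k) $$ (i,j) / fact k)"

definition ME_density :: "(real \<Rightarrow> real) \<Rightarrow> bool" where
  "ME_density g \<longleftrightarrow>
     (\<exists>n (\<alpha>::real vec) (T::real mat) (t::real vec).
        \<alpha> \<in> carrier_vec n \<and> T \<in> carrier_mat n n \<and> t \<in> carrier_vec n \<and>
        (\<forall>x\<ge>0. g x = scalar_prod \<alpha> (mult_mat_vec (mat_exp (x \<cdot>\<^sub>m T)) t))) \<and>
     (\<forall>x\<ge>0. g x \<ge> 0) \<and> (g has_integral 1) {0..}"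

definition MEam :: "(real \<Rightarrow> real) \<Rightarrow> bool" where
  "MEam h \<longleftrightarrow> (\<forall>x\<ge>0. h x \<ge> 0) \<and>
     (\<exists>(K::nat) (c::nat \<Rightarrow> real) (g::nat \<Rightarrow> real \<Rightarrow> real).
        (\<forall>k<K. ME_density (g k)) \<and> (\<Sum>k<K. c k) = 1 \<and>
        (\<forall>x\<ge>0. h x = (\<Sum>k<K. c k * g k x)))"

text \<open>Index set S = {1..L}^M, rendered 0-based as functions {..<M} \<rightarrow> {..<L}.\<close>
definition MME_index :: "nat \<Rightarrow> nat \<Rightarrow> (nat \<Rightarrow> nat) set" where
  "MME_index L M = PiE {..<M} (\<lambda>_. {..<L})"

definition MME_fun :: "nat \<Rightarrow> nat \<Rightarrow> (nat \<Rightarrow> real \<Rightarrow> real) \<Rightarrow> ((nat \<Rightarrow> nat) \<Rightarrow> real)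
    \<Rightarrow> (nat \<Rightarrow> real) \<Rightarrow> real" where
  "MME_fun L M F p x = (\<Sum>i\<in>MME_index L M. p i * (\<Prod>m<M. F (i m) (x m)))"

text \<open>j-th smallest (1-based j) among x_0, ..., x_{M-1}.\<close>
definition order_stat :: "nat \<Rightarrow> nat \<Rightarrow> (nat \<Rightarrow> real) \<Rightarrow> real" where
  "order_stat M j x = sort (map x [0..<M]) ! (j - 1)"

end

theory Submission
  imports Defs
begin

lemma pow_mat_Suc_left:
  assumes A: "A \<in> carrier_mat n n"
  shows "A ^\<^sub>m Suc k = A * A ^\<^sub>m k"
proof (induction k)
  case 0 then show ?case using A by simp
next
  case (Suc k)
  have "A ^\<^sub>m Suc (Suc k) = (A * A ^\<^sub>m k) * A" using Suc by simp
  also have "\<dots> = A * (A ^\<^sub>m k * A)" using A by (simp add: assoc_mult_mat[of _ n n _ n _ n])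
  finally show ?case by simp
qed

lemma pow_entry:
  assumes A: "A \<in> carrier_mat n n" and "i < n" "j < n"
  shows "(A ^\<^sub>m Suc k) $$ (i,j) = (\<Sum>l<n. A $$ (i,l) * (A ^\<^sub>m k) $$ (l,j))"
  using assms by (subst pow_mat_Suc_left[OF A]) (simp add: scalar_prod_def lessThan_atLeast0 del: pow_mat.simps)

lemma pow_smult:
  assumes A: "(A :: real mat) \<in> carrier_mat n n"
  shows "(x \<cdot>\<^sub>m A) ^\<^sub>m k = (x ^ k) \<cdot>\<^sub>m (A ^\<^sub>m k)"
proof (induction k)
  case 0 then show ?case using A by (auto intro!: eq_matI)
next
  case (Suc k)
  have "(x \<cdot>\<^sub>m A) ^\<^sub>m Suc k = ((x ^ k) \<cdot>\<^sub>m (A ^\<^sub>m k)) * (x \<cdot>\<^sub>m A)" using Suc by simp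
  also have "\<dots> = (x ^ Suc k) \<cdot>\<^sub>m (A ^\<^sub>m Suc k)"
    using A by (auto intro!: eq_matI sum.cong simp: scalar_prod_def sum_distrib_left mult_ac)
  finally show ?case .
qed

definition csum :: "nat \<Rightarrow> (nat \<Rightarrow> nat \<Rightarrow> real) \<Rightarrow> real" where
  "csum n T = (\<Sum>i<n. \<Sum>l<n. \<bar>T i l\<bar>)"

lemma pow_bound:
  assumes A: "A \<in> carrier_mat n n" and "i < n" "j < n"
  shows "\<bar>(A ^\<^sub>m k) $$ (i,j)\<bar> \<le> csum n (\<lambda>i l. A $$ (i,l)) ^ k"
  using assms(2,3)
proof (induction k arbitrary: i j)
  case 0 then show ?case using A by simp
next
  case (Suc k)
  let ?c = "csum n (\<lambda>i l. A $$ (i,l))"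
  have "\<bar>(A ^\<^sub>m Suc k) $$ (i,j)\<bar> = \<bar>\<Sum>l<n. A $$ (i,l) * (A ^\<^sub>m k) $$ (l,j)\<bar>"
    using pow_entry[OF A Suc.prems] by simp
  also have "\<dots> \<le> (\<Sum>l<n. \<bar>A $$ (i,l)\<bar> * ?c ^ k)"
    by (rule order_trans[OF sum_abs], rule sum_mono)
       (auto simp: abs_mult intro!: mult_left_mono Suc.IH Suc.prems)
  also have "\<dots> = (\<Sum>l<n. \<bar>A $$ (i,l)\<bar>) * ?c ^ k" by (simp add: sum_distrib_right)
  also have "\<dots> \<le> ?c * ?c ^ k"
  proof (rule mult_right_mono)
    show "(\<Sum>l<n. \<bar>A $$ (i,l)\<bar>) \<le> ?c" unfolding csum_def
      using Suc.prems by (intro member_le_sum) (auto intro: sum_nonneg)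
    show "0 \<le> ?c ^ k" unfolding csum_def by (intro zero_le_power sum_nonneg) auto
  qed
  finally show ?case by simp
qed

definition ent :: "real mat \<Rightarrow> nat \<Rightarrow> nat \<Rightarrow> nat \<Rightarrow> real" where
  "ent A i j k = (A ^\<^sub>m k) $$ (i,j) / fact k"

lemma ent_summable:
  assumes A: "A \<in> carrier_mat n n" and "i < n" "j < n"
  shows "summable (\<lambda>k. ent A i j k * y ^ k)"
proof (rule summable_comparison_test)
  let ?c = "csum n (\<lambda>i l. A $$ (i,l))"
  show "\<exists>N. \<forall>k\<ge>N. norm (ent A i j k * y ^ k) \<le> (?c * \<bar>y\<bar>) ^ k / fact k"
  proof (intro exI allI impI)
    fix k
    have "norm (ent A i j k * y ^ k) = \<bar>(A ^\<^sub>m k) $$ (i,j)\<bar> * \<bar>y\<bar> ^ k / fact k"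
      by (simp add: ent_def abs_mult power_abs)
    also have "\<dots> \<le> ?c ^ k * \<bar>y\<bar> ^ k / fact k"
      by (intro divide_right_mono mult_right_mono pow_bound[OF assms]) auto
    finally show "norm (ent A i j k * y ^ k) \<le> (?c * \<bar>y\<bar>) ^ k / fact k"
      by (simp add: power_mult_distrib)
  qed
  show "summable (\<lambda>k. (?c * \<bar>y\<bar>) ^ k / fact k)"
    using summable_exp[of "?c * \<bar>y\<bar>"] by (simp add: inverse_eq_divide)
qed

lemma mat_exp_entry:
  assumes A: "A \<in> carrier_mat n n" and "i < n" "j < n"
  shows "mat_exp (x \<cdot>\<^sub>m A) $$ (i,j) = (\<Sum>k. ent A i j k * x ^ k)"
  using assms unfolding mat_exp_def ent_def
  by (simp add: pow_smult[OF A] mult_ac)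

lemma ent_deriv:
  assumes A: "A \<in> carrier_mat n n" and ij: "i < n" "j < n"
  shows "((\<lambda>x. \<Sum>k. ent A i j k * x ^ k) has_real_derivative
          (\<Sum>l<n. A $$ (i,l) * (\<Sum>k. ent A l j k * x ^ k))) (at x)"
proof -
  have d: "((\<lambda>x. \<Sum>k. ent A i j k * x ^ k) has_real_derivative
          (\<Sum>k. diffs (ent A i j) k * x ^ k)) (at x)"
    by (rule termdiffs_strong_converges_everywhere) (rule ent_summable[OF assms])
  have "diffs (ent A i j) k = (\<Sum>l<n. A $$ (i,l) * ent A l j k)" for k
    unfolding diffs_def ent_def using pow_entry[OF A ij, of k]
    by (simp add: sum_divide_distrib sum_distrib_left del: of_nat_Suc)
  then have "(\<Sum>k. diffs (ent A i j) k * x ^ k) = (\<Sum>k. \<Sum>l<n. A $$ (i,l) * (ent A l j k * x ^ k))"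
    by (simp add: sum_distrib_right sum_distrib_left mult_ac)
  also have "\<dots> = (\<Sum>l<n. \<Sum>k. A $$ (i,l) * (ent A l j k * x ^ k))"
    by (rule suminf_sum) (auto intro!: summable_mult ent_summable[OF A] ij)
  also have "\<dots> = (\<Sum>l<n. A $$ (i,l) * (\<Sum>k. ent A l j k * x ^ k))"
    using ent_summable[OF A] ij by (intro sum.cong refl suminf_mult) auto
  finally show ?thesis using d by simp
qed

lemma ent_zero:
  assumes A: "A \<in> carrier_mat n n" and "i < n" "j < n"
  shows "(\<Sum>k. ent A i j k * 0 ^ k) = (if i = j then 1 else 0)"
  using assms powser_zero[of "ent A i j"] by (simp add: ent_def)

definition ODE :: "nat \<Rightarrow> (nat \<Rightarrow> nat \<Rightarrow> real) \<Rightarrow> (nat \<Rightarrow> real \<Rightarrow> real) \<Rightarrow> bool" where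
  "ODE n T u \<longleftrightarrow> (\<forall>i<n. \<forall>x. (u i has_real_derivative (\<Sum>j<n. T i j * u j x)) (at x))"

definition solm :: "nat \<Rightarrow> (nat \<Rightarrow> nat \<Rightarrow> real) \<Rightarrow> (nat \<Rightarrow> real) \<Rightarrow> nat \<Rightarrow> real \<Rightarrow> real" where
  "solm n T t i x = (\<Sum>j<n. (\<Sum>k. ent (mat n n (\<lambda>(i,j). T i j)) i j k * x ^ k) * t j)"

lemma ODE_solm: "ODE n T (solm n T t)"
  unfolding ODE_def
proof (intro allI impI)
  fix i x assume i: "i < n"
  define A where "A = mat n n (\<lambda>(i,j). T i j)"
  have A: "A \<in> carrier_mat n n" unfolding A_def by simp
  have AT: "l < n \<Longrightarrow> A $$ (i,l) = T i l" for l using i unfolding A_def by simp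
  have "((\<lambda>x. \<Sum>j<n. (\<Sum>k. ent A i j k * x ^ k) * t j) has_real_derivative
      (\<Sum>j<n. (\<Sum>l<n. A $$ (i,l) * (\<Sum>k. ent A l j k * x ^ k)) * t j)) (at x)"
    by (intro DERIV_sum DERIV_cmult_right ent_deriv[OF A i]) auto
  also have "(\<Sum>j<n. (\<Sum>l<n. A $$ (i,l) * (\<Sum>k. ent A l j k * x ^ k)) * t j)
      = (\<Sum>l<n. T i l * solm n T t l x)"
    unfolding solm_def A_def[symmetric] sum_distrib_right sum_distrib_left
    apply (subst sum.swap)
    apply (intro sum.cong refl)
    using AT by (simp add: mult_ac)
  finally show "(solm n T t i has_real_derivative (\<Sum>j<n. T i j * solm n T t j x)) (at x)"
    unfolding solm_def A_def[symmetric] .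
qed

lemma solm_0: "i < n \<Longrightarrow> solm n T t i 0 = t i"
proof -
  assume i: "i < n"
  define A where "A = mat n n (\<lambda>(i,j). T i j)"
  have A: "A \<in> carrier_mat n n" unfolding A_def by simp
  have "solm n T t i 0 = (\<Sum>j<n. (if i = j then 1 else 0) * t j)"
    unfolding solm_def A_def[symmetric] using ent_zero[OF A i] by simp
  also have "\<dots> = (\<Sum>j<n. if i = j then t j else 0)" by (rule sum.cong) auto
  also have "\<dots> = t i" using i by simp
  finally show ?thesis .
qed

lemma ODE_zero_unique:
  assumes w: "ODE n T w" and w0: "\<forall>i<n. w i 0 = 0" and i: "i < n"
  shows "w i x = 0"
proof -
  define c where "c = csum n T"
  have c0: "c \<ge> 0" unfolding c_def csum_def by (auto intro: sum_nonneg)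
  define e where "e = (\<lambda>x. \<Sum>i<n. (w i x)^2)"
  define D where "D = (\<lambda>x. 2 * (\<Sum>i<n. \<Sum>j<n. T i j * (w i x * w j x)))"
  have e_nn: "e y \<ge> 0" for y unfolding e_def by (auto intro: sum_nonneg)
  have sq_le: "i < n \<Longrightarrow> (w i y)^2 \<le> e y" for i y
    unfolding e_def by (rule member_le_sum) auto
  have de: "(e has_real_derivative D y) (at y)" for y
  proof -
    have "(e has_real_derivative (\<Sum>i<n. 2 * w i y * (\<Sum>j<n. T i j * w j y))) (at y)"
      unfolding e_def using w unfolding ODE_def
      by (auto intro!: derivative_eq_intros DERIV_sum simp: power2_eq_square)
    moreover have "(\<Sum>i<n. 2 * w i y * (\<Sum>j<n. T i j * w j y)) = D y"
      unfolding D_def by (simp add: sum_distrib_left mult_ac)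
    ultimately show ?thesis by simp
  qed
  have Dbound: "\<bar>D y\<bar> \<le> 2 * c * e y" for y
  proof -
    have pb: "\<bar>w i y\<bar> * \<bar>w j y\<bar> \<le> e y" if "i < n" "j < n" for i j
    proof -
      have "\<bar>w i y\<bar> * \<bar>w j y\<bar> \<le> max ((w i y)^2) ((w j y)^2)"
      proof (cases "\<bar>w i y\<bar> \<le> \<bar>w j y\<bar>")
        case True
        then have "\<bar>w i y\<bar> * \<bar>w j y\<bar> \<le> \<bar>w j y\<bar> * \<bar>w j y\<bar>" by (intro mult_right_mono) auto
        then show ?thesis by (simp add: abs_mult power2_eq_square)
      next
        case False
        then have "\<bar>w i y\<bar> * \<bar>w j y\<bar> \<le> \<bar>w i y\<bar> * \<bar>w i y\<bar>" by (intro mult_left_mono) auto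
        then show ?thesis by (simp add: abs_mult power2_eq_square)
      qed
      also have "\<dots> \<le> e y" using sq_le that by auto
      finally show ?thesis .
    qed
    have "\<bar>\<Sum>i<n. \<Sum>j<n. T i j * (w i y * w j y)\<bar> \<le> (\<Sum>i<n. \<Sum>j<n. \<bar>T i j\<bar> * e y)"
      by (rule order_trans[OF sum_abs], rule sum_mono, rule order_trans[OF sum_abs], rule sum_mono)
         (auto simp: abs_mult intro!: mult_left_mono pb)
    also have "\<dots> = c * e y" unfolding c_def csum_def by (simp add: sum_distrib_right)
    finally show ?thesis unfolding D_def by simp
  qed
  have ex0: "e x = 0"
  proof (cases "x \<ge> 0")
    case True
    define k where "k = (\<lambda>y. - (e y * exp (- 2 * c * y)))"
    have dk: "(k has_real_derivative (- (D y * exp (- 2 * c * y) + e y * (exp (- 2 * c * y) * (- 2 * c))))) (at y)" for y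
      unfolding k_def by (auto intro!: derivative_eq_intros de)
    have "k 0 \<le> k x"
    proof (rule deriv_nonneg_imp_mono[OF dk])
      fix y
      have "D y \<le> 2 * c * e y" using Dbound[of y] by auto
      then have "D y * exp (- 2 * c * y) \<le> 2 * c * e y * exp (- 2 * c * y)"
        by (intro mult_right_mono) auto
      then show "0 \<le> - (D y * exp (- 2 * c * y) + e y * (exp (- 2 * c * y) * (- 2 * c)))"
        by (simp add: algebra_simps)
    qed (use True in auto)
    moreover have "e 0 = 0" unfolding e_def using w0 by simp
    ultimately have "e x * exp (- 2 * c * x) \<le> 0" unfolding k_def by simp
    then have "e x \<le> 0" by (simp add: mult_le_0_iff)
    then show ?thesis using e_nn[of x] by simp
  next
    case False
    define k where "k = (\<lambda>y. e y * exp (2 * c * y))"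
    have dk: "(k has_real_derivative (D y * exp (2 * c * y) + e y * (exp (2 * c * y) * (2 * c)))) (at y)" for y
      unfolding k_def by (auto intro!: derivative_eq_intros de)
    have "k x \<le> k 0"
    proof (rule deriv_nonneg_imp_mono[OF dk])
      fix y
      have "- D y \<le> 2 * c * e y" using Dbound[of y] by auto
      then have "- D y * exp (2 * c * y) \<le> 2 * c * e y * exp (2 * c * y)"
        by (intro mult_right_mono) auto
      then show "0 \<le> D y * exp (2 * c * y) + e y * (exp (2 * c * y) * (2 * c))"
        by (simp add: algebra_simps)
    qed (use False in auto)
    moreover have "e 0 = 0" unfolding e_def using w0 by simp
    ultimately have "e x * exp (2 * c * x) \<le> 0" unfolding k_def by simp
    then have "e x \<le> 0" by (simp add: mult_le_0_iff)
    then show ?thesis using e_nn[of x] by simp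
  qed
  then have "(w i x)^2 \<le> 0" using sq_le[OF i, of x] by simp
  then show ?thesis by simp
qed

lemma ODE_unique:
  assumes u: "ODE n T u" and v: "ODE n T v" and uv0: "\<forall>i<n. u i 0 = v i 0" and i: "i < n"
  shows "u i x = v i x"
proof -
  have "ODE n T (\<lambda>i x. u i x - v i x)"
    using u v unfolding ODE_def
    by (auto intro!: derivative_eq_intros simp: sum_subtractf[symmetric] right_diff_distrib)
  from ODE_zero_unique[OF this _ i] uv0 show ?thesis by simp
qed

lemma ODE_eq_solm:
  assumes u: "ODE n T u" and i: "i < n"
  shows "u i x = solm n T (\<lambda>j. u j 0) i x"
  using ODE_unique[OF u ODE_solm] solm_0 i by auto

definition EF :: "(real \<Rightarrow> real) \<Rightarrow> bool" where
  "EF g \<longleftrightarrow> (\<exists>n a T u. ODE n T u \<and> (\<forall>x. g x = (\<Sum>i<n. a i * u i x)))"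

lemma sum_split_nat: "(\<Sum>i<(m::nat) + k. f i) = (\<Sum>i<m. f i) + (\<Sum>i<k. f (m + i)) "
  by (induction k) (auto simp: add_ac)

lemma sum_prod_nat: "(\<Sum>p<(m::nat) * k. f p) = (\<Sum>i<m. \<Sum>j<k. f (i * k + j))"
proof (induction m)
  case 0 then show ?case by simp
next
  case (Suc m)
  have "(\<Sum>p<Suc m * k. f p) = (\<Sum>p<m * k + k. f p)" by (simp add: add_ac)
  also have "\<dots> = (\<Sum>p<m * k. f p) + (\<Sum>j<k. f (m * k + j))" by (rule sum_split_nat)
  finally show ?case using Suc by simp
qed

lemma EF_const: "EF (\<lambda>x. c)"
  unfolding EF_def ODE_def
  by (rule exI[of _ 1], rule exI[of _ "\<lambda>_. c"], rule exI[of _ "\<lambda>_ _. 0"], rule exI[of _ "\<lambda>_ _. 1"]) auto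

lemma EF_add:
  assumes "EF f" "EF g" shows "EF (\<lambda>x. f x + g x)"
proof -
  obtain n1 a1 T1 u1 where 1: "ODE n1 T1 u1" "\<And>x. f x = (\<Sum>i<n1. a1 i * u1 i x)"
    using assms(1) unfolding EF_def by blast
  obtain n2 a2 T2 u2 where 2: "ODE n2 T2 u2" "\<And>x. g x = (\<Sum>i<n2. a2 i * u2 i x)"
    using assms(2) unfolding EF_def by blast
  define u where "u = (\<lambda>i. if i < n1 then u1 i else u2 (i - n1))"
  define a where "a = (\<lambda>i. if i < n1 then a1 i else a2 (i - n1))"
  define T where "T = (\<lambda>i j. if i < n1 then (if j < n1 then T1 i j else 0)
                      else (if j < n1 then 0 else T2 (i - n1) (j - n1)))"
  have "ODE (n1 + n2) T u"
    unfolding ODE_def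
  proof (intro allI impI)
    fix i x assume i: "i < n1 + n2"
    show "(u i has_real_derivative (\<Sum>j<n1 + n2. T i j * u j x)) (at x)"
    proof (cases "i < n1")
      case True
      then have "(\<Sum>j<n1 + n2. T i j * u j x) = (\<Sum>j<n1. T1 i j * u1 j x)"
        unfolding sum_split_nat by (simp add: T_def u_def)
      then show ?thesis using 1(1) True unfolding ODE_def u_def by simp
    next
      case False
      then have "(\<Sum>j<n1 + n2. T i j * u j x) = (\<Sum>j<n2. T2 (i - n1) j * u2 j x)"
        unfolding sum_split_nat by (simp add: T_def u_def)
      then show ?thesis using 2(1) False i unfolding ODE_def u_def by simp
    qed
  qed
  moreover have "f x + g x = (\<Sum>i<n1 + n2. a i * u i x)" for x
    unfolding sum_split_nat 1(2) 2(2) by (simp add: a_def u_def)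
  ultimately show ?thesis unfolding EF_def by blast
qed

lemma delta_sum: "finite S \<Longrightarrow> k \<in> S \<Longrightarrow> (\<Sum>l\<in>S. (if k = l then c l else 0) * f l) = c k * (f k :: real)"
proof -
  assume S: "finite S" "k \<in> S"
  have "(\<Sum>l\<in>S. (if k = l then c l else 0) * f l) = (\<Sum>l\<in>S. if k = l then c l * f l else 0)"
    by (rule sum.cong) auto
  then show ?thesis using S by simp
qed

lemma EF_mult:
  assumes "EF f" "EF g" shows "EF (\<lambda>x. f x * g x)"
proof -
  obtain n1 a1 T1 u1 where 1: "ODE n1 T1 u1" "\<And>x. f x = (\<Sum>i<n1. a1 i * u1 i x)"
    using assms(1) unfolding EF_def by blast
  obtain n2 a2 T2 u2 where 2: "ODE n2 T2 u2" "\<And>x. g x = (\<Sum>i<n2. a2 i * u2 i x)"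
    using assms(2) unfolding EF_def by blast
  define u where "u = (\<lambda>p x. u1 (p div n2) x * u2 (p mod n2) x)"
  define a where "a = (\<lambda>p. a1 (p div n2) * a2 (p mod n2))"
  define T where "T = (\<lambda>p q. (if p mod n2 = q mod n2 then T1 (p div n2) (q div n2) else 0)
                      + (if p div n2 = q div n2 then T2 (p mod n2) (q mod n2) else 0))"
  have dm: "(i * n2 + k) div n2 = i" "(i * n2 + k) mod n2 = k" if "k < n2" for i k
    using that by auto
  have "ODE (n1 * n2) T u"
    unfolding ODE_def
  proof (intro allI impI)
    fix p x assume p: "p < n1 * n2"
    then have n2: "n2 > 0" by (cases n2) auto
    define i where "i = p div n2"
    define k where "k = p mod n2"
    have ik: "i < n1" "k < n2" "p = i * n2 + k" unfolding i_def k_def using p n2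
      by (auto simp: less_mult_imp_div_less)
    have a1: "(\<Sum>j<n1. \<Sum>l<n2. (if k = l then T1 i j else 0) * (u1 j x * u2 l x))
        = (\<Sum>j<n1. T1 i j * u1 j x) * u2 k x"
      using ik by (subst delta_sum[where c="\<lambda>l. T1 i _"]) (auto simp: sum_distrib_right sum_distrib_left mult_ac)
    have "(\<Sum>j<n1. \<Sum>l<n2. (if i = j then T2 k l else 0) * (u1 j x * u2 l x))
        = (\<Sum>j<n1. (if i = j then (\<Sum>l<n2. T2 k l * (u1 j x * u2 l x)) else 0))"
      by (rule sum.cong) auto
    also have "\<dots> = u1 i x * (\<Sum>l<n2. T2 k l * u2 l x)"
      using ik by (simp add: sum_distrib_left mult_ac)
    finally have a2: "(\<Sum>j<n1. \<Sum>l<n2. (if i = j then T2 k l else 0) * (u1 j x * u2 l x))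
        = u1 i x * (\<Sum>l<n2. T2 k l * u2 l x)" .
    have "(\<Sum>q<n1 * n2. T p q * u q x)
       = (\<Sum>j<n1. \<Sum>l<n2. ((if k = l then T1 i j else 0) + (if i = j then T2 k l else 0))
            * (u1 j x * u2 l x))"
      unfolding sum_prod_nat T_def u_def
      by (intro sum.cong refl) (auto simp: dm i_def[symmetric] k_def[symmetric])
    also have "\<dots> = (\<Sum>j<n1. \<Sum>l<n2. (if k = l then T1 i j else 0) * (u1 j x * u2 l x))
        + (\<Sum>j<n1. \<Sum>l<n2. (if i = j then T2 k l else 0) * (u1 j x * u2 l x))"
      by (simp add: distrib_right sum.distrib)
    also have "\<dots> = (\<Sum>j<n1. T1 i j * u1 j x) * u2 k x + u1 i x * (\<Sum>l<n2. T2 k l * u2 l x)"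
      using a1 a2 by simp
    finally have eq: "(\<Sum>q<n1 * n2. T p q * u q x) = \<dots>" .
    have "((\<lambda>x. u1 i x * u2 k x) has_real_derivative
           (\<Sum>j<n1. T1 i j * u1 j x) * u2 k x + u1 i x * (\<Sum>l<n2. T2 k l * u2 l x)) (at x)"
      using 1(1) 2(1) ik unfolding ODE_def
      by (auto intro!: derivative_eq_intros)
    moreover have "u p = (\<lambda>x. u1 i x * u2 k x)" unfolding u_def i_def k_def ..
    ultimately show "(u p has_real_derivative (\<Sum>q<n1 * n2. T p q * u q x)) (at x)"
      unfolding eq by simp
  qed
  moreover have "f x * g x = (\<Sum>p<n1 * n2. a p * u p x)" for x
    unfolding sum_prod_nat 1(2) 2(2) a_def u_def sum_product
    by (intro sum.cong refl) (auto simp: dm mult_ac)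
  ultimately show ?thesis unfolding EF_def by blast
qed

lemma EF_scale: "EF f \<Longrightarrow> EF (\<lambda>x. c * f x)"
  using EF_mult[OF EF_const] by blast

lemma EF_sum: "finite S \<Longrightarrow> (\<And>s. s \<in> S \<Longrightarrow> EF (f s)) \<Longrightarrow> EF (\<lambda>x. \<Sum>s\<in>S. f s x)"
  by (induction S rule: finite_induct) (auto intro: EF_const EF_add)

lemma EF_prod: "finite S \<Longrightarrow> (\<And>s. s \<in> S \<Longrightarrow> EF (f s)) \<Longrightarrow> EF (\<lambda>x. \<Prod>s\<in>S. f s x)"
  by (induction S rule: finite_induct) (auto intro: EF_const EF_mult)

lemma EF_deriv:
  assumes "EF g" shows "\<exists>g'. EF g' \<and> (\<forall>x. (g has_real_derivative g' x) (at x))"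
proof -
  obtain n a T u where 1: "ODE n T u" "\<And>x. g x = (\<Sum>i<n. a i * u i x)"
    using assms unfolding EF_def by blast
  have g: "g = (\<lambda>x. \<Sum>i<n. a i * u i x)" using 1(2) by auto
  define g' where "g' = (\<lambda>x. \<Sum>j<n. (\<Sum>i<n. a i * T i j) * u j x)"
  have "EF g'" unfolding EF_def g'_def using 1(1)
    by (intro exI[of _ n] exI[of _ "\<lambda>j. \<Sum>i<n. a i * T i j"] exI[of _ T] exI[of _ u]) auto
  moreover have "(g has_real_derivative g' x) (at x)" for x
  proof -
    have "(g has_real_derivative (\<Sum>i<n. a i * (\<Sum>j<n. T i j * u j x))) (at x)"
      unfolding g using 1(1) unfolding ODE_def by (auto intro!: DERIV_sum DERIV_cmult)
    also have "(\<Sum>i<n. a i * (\<Sum>j<n. T i j * u j x)) = g' x"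
      unfolding g'_def sum_distrib_left sum_distrib_right
      by (subst sum.swap) (simp add: mult_ac)
    finally show ?thesis .
  qed
  ultimately show ?thesis by blast
qed

lemma EF_antideriv:
  assumes "EF g" shows "\<exists>G. EF G \<and> G 0 = 0 \<and> (\<forall>x. (G has_real_derivative g x) (at x))"
proof -
  obtain n a T u where 1: "ODE n T u" "\<And>x. g x = (\<Sum>i<n. a i * u i x)"
    using assms unfolding EF_def by blast
  define T' where "T' = (\<lambda>i j. if i < n then (if j < n then T i j else 0) else (if j < n then a j else 0))"
  define t' where "t' = (\<lambda>j. if j < n then u j 0 else 0)"
  define v where "v = solm (Suc n) T' t'"
  have v: "ODE (Suc n) T' v" unfolding v_def by (rule ODE_solm)
  have v0: "i < Suc n \<Longrightarrow> v i 0 = t' i" for i unfolding v_def by (rule solm_0)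
  have "ODE n T v" unfolding ODE_def
  proof (intro allI impI)
    fix i x assume i: "i < n"
    have "(v i has_real_derivative (\<Sum>j<Suc n. T' i j * v j x)) (at x)"
      using v i unfolding ODE_def by auto
    also have "(\<Sum>j<Suc n. T' i j * v j x) = (\<Sum>j<n. T i j * v j x)"
      using i by (simp add: T'_def)
    finally show "(v i has_real_derivative (\<Sum>j<n. T i j * v j x)) (at x)" .
  qed
  moreover have "\<forall>i<n. v i 0 = u i 0" using v0 by (simp add: t'_def)
  ultimately have uv: "i < n \<Longrightarrow> v i x = u i x" for i x
    using ODE_unique[of n T v u i x] 1(1) by blast
  define G where "G = v n"
  have "(G has_real_derivative g x) (at x)" for x
  proof -
    have "(G has_real_derivative (\<Sum>j<Suc n. T' n j * v j x)) (at x)"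
      using v unfolding ODE_def G_def by auto
    also have "(\<Sum>j<Suc n. T' n j * v j x) = g x"
      using uv by (simp add: T'_def 1(2))
    finally show ?thesis .
  qed
  moreover have "G 0 = 0" unfolding G_def using v0[of n] by (simp add: t'_def)
  moreover have "EF G" unfolding EF_def
    by (rule exI[of _ "Suc n"], rule exI[of _ "\<lambda>i. if i = n then 1 else 0"], rule exI[of _ T'],
        rule exI[of _ v]) (simp add: v G_def)
  ultimately show ?thesis by blast
qed

lemma scalar_mexp:
  assumes T: "T \<in> carrier_mat n n" and al: "\<alpha> \<in> carrier_vec n" and t: "t \<in> carrier_vec n"
  shows "scalar_prod \<alpha> (mult_mat_vec (mat_exp (x \<cdot>\<^sub>m T)) t)
     = (\<Sum>i<n. \<alpha> $ i * solm n (\<lambda>i j. T $$ (i,j)) (\<lambda>j. t $ j) i x)"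
proof -
  have TT: "mat n n (\<lambda>(i,j). T $$ (i,j)) = T" using T by (auto intro!: eq_matI)
  have dims: "dim_row (mat_exp (x \<cdot>\<^sub>m T)) = n" "dim_col (mat_exp (x \<cdot>\<^sub>m T)) = n"
    using T unfolding mat_exp_def by auto
  show ?thesis
    unfolding scalar_prod_def solm_def TT using dims al t
    by (auto simp: lessThan_atLeast0 scalar_prod_def mat_exp_entry[OF T] intro!: sum.cong)
qed

lemma ME_to_EF:
  assumes "ME_density g" shows "\<exists>gh. EF gh \<and> (\<forall>x\<ge>0. gh x = g x)"
proof -
  obtain n \<alpha> T t where r: "\<alpha> \<in> carrier_vec n" "T \<in> carrier_mat n n" "t \<in> carrier_vec n"
    "\<forall>x\<ge>0. g x = scalar_prod \<alpha> (mult_mat_vec (mat_exp (x \<cdot>\<^sub>m T)) t)"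
    using assms unfolding ME_density_def by blast
  define gh where "gh = (\<lambda>x. \<Sum>i<n. \<alpha> $ i * solm n (\<lambda>i j. T $$ (i,j)) (\<lambda>j. t $ j) i x)"
  have "EF gh" unfolding EF_def gh_def using ODE_solm by blast
  moreover have "\<forall>x\<ge>0. gh x = g x" using r scalar_mexp[OF r(2,1,3)] unfolding gh_def by auto
  ultimately show ?thesis by blast
qed

lemma EF_to_ME:
  assumes "EF h" "\<forall>x\<ge>0. h x \<ge> 0" "(h has_integral 1) {0..}"
  shows "ME_density h"
proof -
  obtain n a T u where 1: "ODE n T u" "\<And>x. h x = (\<Sum>i<n. a i * u i x)"
    using assms unfolding EF_def by blast
  define Tm where "Tm = mat n n (\<lambda>(i,j). T i j)"
  have Tm: "Tm \<in> carrier_mat n n" unfolding Tm_def by simp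
  have TmT: "mat n n (\<lambda>(i,j). Tm $$ (i,j)) = mat n n (\<lambda>(i,j). T i j)"
    unfolding Tm_def by (auto intro!: eq_matI)
  have "h x = scalar_prod (vec n a) (mult_mat_vec (mat_exp (x \<cdot>\<^sub>m Tm)) (vec n (\<lambda>j. u j 0)))" for x
  proof -
    have "scalar_prod (vec n a) (mult_mat_vec (mat_exp (x \<cdot>\<^sub>m Tm)) (vec n (\<lambda>j. u j 0)))
        = (\<Sum>i<n. vec n a $ i * solm n (\<lambda>i j. Tm $$ (i,j)) (\<lambda>j. vec n (\<lambda>j. u j 0) $ j) i x)"
      by (rule scalar_mexp[OF Tm]) auto
    also have "\<dots> = (\<Sum>i<n. a i * solm n T (\<lambda>j. u j 0) i x)"
      unfolding solm_def TmT by (intro sum.cong refl) auto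
    also have "\<dots> = h x" using ODE_eq_solm[OF 1(1)] 1(2) by simp
    finally show ?thesis by simp
  qed
  then show ?thesis unfolding ME_density_def using assms(2,3) Tm
    by (intro conjI exI[of _ n] exI[of _ "vec n a"] exI[of _ Tm] exI[of _ "vec n (\<lambda>j. u j 0)"]) auto
qed

lemma deriv_measurable:
  assumes "\<forall>x. (g has_real_derivative g' x) (at x)"
  shows "g \<in> borel_measurable borel"
proof (rule borel_measurable_continuous_onI)
  show "continuous_on UNIV g"
    using assms by (intro continuous_at_imp_continuous_on) (auto intro: DERIV_isCont)
qed

lemma EF_measurable: "EF g \<Longrightarrow> g \<in> borel_measurable borel"
  using EF_deriv deriv_measurable by blast

lemma lint_has_integral:
  fixes f :: "real \<Rightarrow> real"
  assumes f: "f \<in> borel_measurable borel" "\<And>x. 0 \<le> f x" and I: "(f has_integral I) UNIV"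
  shows "integrable lborel f" "integral\<^sup>L lborel f = I"
proof -
  have I0: "0 \<le> I" using has_integral_nonneg[OF I] f by auto
  have nn: "(\<integral>\<^sup>+x. ennreal (f x) \<partial>lborel) = ennreal I"
    using nn_integral_has_integral_lebesgue[of UNIV f I] f I by simp
  show "integrable lborel f"
    by (rule integrableI_nn_integral_finite[OF _ _ nn]) (use f in auto)
  show "integral\<^sup>L lborel f = I"
    using integral_eq_nn_integral[of f lborel] f nn I0 by simp
qed

lemma one_dim:
  assumes ME: "ME_density f" and fh: "EF fh" "\<forall>x\<ge>0. fh x = f x"
    and G: "\<forall>x. (Gf has_real_derivative fh x) (at x)" "Gf 0 = 0"
  defines "d \<equiv> \<lambda>x. if 0 \<le> x then f x else 0"
  shows "d \<in> borel_measurable borel" "\<And>x. d x \<ge> 0" "integrable lborel d" "integral\<^sup>L lborel d = 1"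
    "\<And>y. integrable lborel (\<lambda>x. indicator {..y} x * d x)"
    "\<And>y. integral\<^sup>L lborel (\<lambda>x. indicator {..y} x * d x) = (if 0 \<le> y then Gf y else 0)"
proof -
  have dfh: "d = (\<lambda>x. if 0 \<le> x then fh x else 0)" unfolding d_def using fh(2) by auto
  have fhm[measurable]: "fh \<in> borel_measurable borel" using EF_measurable[OF fh(1)] .
  show dm: "d \<in> borel_measurable borel" unfolding dfh by measurable
  show dnn: "d x \<ge> 0" for x using ME unfolding d_def ME_density_def by auto
  have "(f has_integral 1) {0..}" using ME unfolding ME_density_def by auto
  then have "(d has_integral 1) UNIV" unfolding d_def
    using has_integral_restrict_UNIV[of "{0..}" f 1] by (simp add: atLeast_def)
  from lint_has_integral[OF dm _ this] dnn
  show "integrable lborel d" "integral\<^sup>L lborel d = 1" by auto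
  fix y :: real
  have m: "(\<lambda>x. indicator {..y} x * d x) \<in> borel_measurable borel" using dm by measurable
  have hi: "((\<lambda>x. indicator {..y} x * d x) has_integral (if 0 \<le> y then Gf y else 0)) UNIV"
  proof (cases "0 \<le> y")
    case True
    have "(fh has_integral (Gf y - Gf 0)) {0..y}"
      using True G(1) by (intro fundamental_theorem_of_calculus)
        (auto simp: has_real_derivative_iff_has_vector_derivative[symmetric] intro: has_field_derivative_at_within)
    then have "((\<lambda>x. if x \<in> {0..y} then fh x else 0) has_integral Gf y) UNIV"
      using has_integral_restrict_UNIV[of "{0..y}" fh "Gf y"] G(2) by simp
    moreover have "(\<lambda>x. if x \<in> {0..y} then fh x else 0) = (\<lambda>x. indicator {..y} x * d x)"
      unfolding dfh by (auto simp: indicator_def)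
    ultimately show ?thesis using True by simp
  next
    case False
    have "(\<lambda>x. indicator {..y} x * d x) = (\<lambda>x. 0)"
      using False unfolding d_def by (auto simp: indicator_def fun_eq_iff)
    then show ?thesis using False by simp
  qed
  from lint_has_integral[OF m _ hi] dnn
  show "integrable lborel (\<lambda>x. indicator {..y} x * d x)"
    "integral\<^sup>L lborel (\<lambda>x. indicator {..y} x * d x) = (if 0 \<le> y then Gf y else 0)"
    by auto
qed

lemma card_filter_sort:
  "card {i. i < M \<and> sort (map x [0..<M]) ! i \<le> y} = card {m\<in>{..<M}. x m \<le> (y::real)}"
proof -
  have "card {i. i < M \<and> sort (map x [0..<M]) ! i \<le> y}
      = length (filter (\<lambda>v. v \<le> y) (sort (map x [0..<M])))"
    by (simp add: length_filter_conv_card)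
  also have "\<dots> = length (filter (\<lambda>v. v \<le> y) (map x [0..<M]))"
    by (simp add: filter_sort)
  also have "\<dots> = card {i. i < M \<and> map x [0..<M] ! i \<le> y}"
    by (simp add: length_filter_conv_card)
  also have "{i. i < M \<and> map x [0..<M] ! i \<le> y} = {m\<in>{..<M}. x m \<le> y}" by auto
  finally show ?thesis .
qed

lemma order_stat_le:
  assumes "1 \<le> j" "j \<le> M"
  shows "order_stat M j x \<le> y \<longleftrightarrow> j \<le> card {m\<in>{..<M}. x m \<le> (y::real)}"
proof -
  define xs where "xs = sort (map x [0..<M])"
  have len: "length xs = M" unfolding xs_def by simp
  have so: "sorted xs" unfolding xs_def by simp
  define K where "K = {i. i < M \<and> xs ! i \<le> y}"
  have cK: "card K = card {m\<in>{..<M}. x m \<le> y}" unfolding K_def xs_def by (rule card_filter_sort)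
  have fK: "finite K" unfolding K_def by auto
  have os: "order_stat M j x = xs ! (j - 1)" unfolding order_stat_def xs_def ..
  show ?thesis
  proof
    assume le: "order_stat M j x \<le> y"
    have "{..<j} \<subseteq> K"
    proof
      fix i assume "i \<in> {..<j}"
      then have "i \<le> j - 1" "i < M" using assms by auto
      then have "xs ! i \<le> xs ! (j - 1)" using so len assms by (intro sorted_nth_mono) auto
      then show "i \<in> K" using le os \<open>i < M\<close> unfolding K_def by auto
    qed
    from card_mono[OF fK this] show "j \<le> card {m\<in>{..<M}. x m \<le> y}" using cK by simp
  next
    assume ge: "j \<le> card {m\<in>{..<M}. x m \<le> y}"
    show "order_stat M j x \<le> y"
    proof (rule ccontr)
      assume "\<not> order_stat M j x \<le> y"
      then have gt: "xs ! (j - 1) > y" using os by simp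
      have "K \<subseteq> {..<j - 1}"
      proof
        fix i assume "i \<in> K"
        then have i: "i < M" "xs ! i \<le> y" unfolding K_def by auto
        show "i \<in> {..<j - 1}"
        proof (rule ccontr)
          assume "i \<notin> {..<j - 1}"
          then have "xs ! (j - 1) \<le> xs ! i" using so len i assms by (intro sorted_nth_mono) auto
          then show False using gt i by simp
        qed
      qed
      from card_mono[OF _ this] have "card K \<le> j - 1" by simp
      then show False using ge cK assms by simp
    qed
  qed
qed

definition SS :: "nat \<Rightarrow> nat \<Rightarrow> nat set set" where
  "SS M j = {S. S \<subseteq> {..<M} \<and> j \<le> card S}"

definition psi :: "nat set \<Rightarrow> real \<Rightarrow> nat \<Rightarrow> real \<Rightarrow> real" where
  "psi S y m t = (if m \<in> S then indicator {..y} t else indicator {y<..} t)"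

lemma finite_SS: "finite (SS M j)"
  unfolding SS_def by (rule finite_subset[of _ "Pow {..<M}"]) auto

lemma prod_psi:
  assumes "S \<subseteq> {..<M}"
  shows "(\<Prod>m<M. psi S y m (x m)) = (if S = {m\<in>{..<M}. x m \<le> y} then 1 else 0)"
proof (cases "S = {m\<in>{..<M}. x m \<le> y}")
  case True
  then show ?thesis by (auto intro!: prod.neutral simp: psi_def indicator_def)
next
  case False
  then obtain m where m: "m < M" "m \<in> S \<longleftrightarrow> \<not> x m \<le> y" using assms by auto
  then have "psi S y m (x m) = 0" unfolding psi_def by (auto simp: indicator_def)
  then have "(\<Prod>m<M. psi S y m (x m)) = 0" using m(1) by (intro prod_zero) auto
  then show ?thesis using False by simp
qed

lemma ind_sum:
  "(if j \<le> card {m\<in>{..<M}. x m \<le> y} then 1 else 0 :: real) = (\<Sum>S\<in>SS M j. \<Prod>m<M. psi S y m (x m))"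
proof -
  have "(\<Sum>S\<in>SS M j. \<Prod>m<M. psi S y m (x m))
      = (\<Sum>S\<in>SS M j. if {m\<in>{..<M}. x m \<le> y} = S then 1 else 0)"
    by (intro sum.cong refl) (auto simp: SS_def prod_psi)
  also have "\<dots> = (if {m\<in>{..<M}. x m \<le> y} \<in> SS M j then 1 else 0)"
    using finite_SS[of M j] by (simp add: sum.delta')
  also have "\<dots> = (if j \<le> card {m\<in>{..<M}. x m \<le> y} then 1 else 0)"
    unfolding SS_def by auto
  finally show ?thesis ..
qed

lemma order_stat_measurable:
  assumes "1 \<le> j" "j \<le> M"
  shows "order_stat M j \<in> borel_measurable (PiM {..<M} (\<lambda>_. lborel))"
  unfolding borel_measurable_iff_le
proof
  fix a :: real
  let ?P = "PiM {..<M} (\<lambda>_. lborel)"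
  have m: "(\<lambda>x. \<Sum>S\<in>SS M j. \<Prod>m<M. psi S a m (x m)) \<in> borel_measurable ?P"
    unfolding psi_def by measurable
  have "{w \<in> space ?P. order_stat M j w \<le> a}
      = {w \<in> space ?P. (\<Sum>S\<in>SS M j. \<Prod>m<M. psi S a m (w m)) = 1}"
    using order_stat_le[OF assms] ind_sum[of j M _ a, symmetric] by (auto split: if_splits)
  also have "\<dots> \<in> sets ?P" using m by measurable
  finally show "{w \<in> space ?P. order_stat M j w \<le> a} \<in> sets ?P" .
qed

lemma order_stat_restrict: "order_stat M j (restrict x {..<M}) = order_stat M j x"
proof -
  have "map (restrict x {..<M}) [0..<M] = map x [0..<M]" by (rule map_cong) auto
  then show ?thesis unfolding order_stat_def by (simp only:)
qed

lemma psi_int: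
  assumes dm: "d \<in> borel_measurable borel" and di: "integrable lborel d"
    and ii: "integrable lborel (\<lambda>x. indicator {..y} x * d x)"
  shows "integrable lborel (\<lambda>t. psi S y m t * d t)"
    "integral\<^sup>L lborel (\<lambda>t. psi S y m t * d t) =
      (if m \<in> S then integral\<^sup>L lborel (\<lambda>x. indicator {..y} x * d x)
       else integral\<^sup>L lborel d - integral\<^sup>L lborel (\<lambda>x. indicator {..y} x * d x))"
proof -
  have e: "(\<lambda>t. psi S y m t * d t) = (if m \<in> S then (\<lambda>x. indicator {..y} x * d x)
            else (\<lambda>x. d x - indicator {..y} x * d x))"
    unfolding psi_def by (auto simp: fun_eq_iff indicator_def)
  show "integrable lborel (\<lambda>t. psi S y m t * d t)"
    unfolding e using di ii by auto
  show "integral\<^sup>L lborel (\<lambda>t. psi S y m t * d t) = (if m \<in> S then integral\<^sup>L lborel (\<lambda>x. indicator {..y} x * d x)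
       else integral\<^sup>L lborel d - integral\<^sup>L lborel (\<lambda>x. indicator {..y} x * d x))"
    unfolding e using di ii by auto
qed

lemma finite_MME_index: "finite (MME_index L M)"
  unfolding MME_index_def by (intro finite_PiE) auto

lemma cdf_formula:
  fixes d :: "nat \<Rightarrow> real \<Rightarrow> real" and p :: "(nat \<Rightarrow> nat) \<Rightarrow> real"
  assumes jM: "1 \<le> j" "j \<le> M"
    and dm: "\<And>l. l < L \<Longrightarrow> d l \<in> borel_measurable borel"
    and di: "\<And>l. l < L \<Longrightarrow> integrable lborel (d l)"
    and d1: "\<And>l. l < L \<Longrightarrow> integral\<^sup>L lborel (d l) = 1"
    and ii: "\<And>l y. l < L \<Longrightarrow> integrable lborel (\<lambda>x. indicator {..y} x * d l x)"
    and fr_def: "fr = (\<lambda>x. \<Sum>i\<in>MME_index L M. p i * (\<Prod>m<M. d (i m) (x m)))"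
    and fr_nn: "\<And>x. x \<in> space (PiM {..<M} (\<lambda>_. lborel)) \<Longrightarrow> 0 \<le> fr x"
    and C_def: "C = (\<lambda>l y. integral\<^sup>L lborel (\<lambda>x. indicator {..y} x * d l x))"
  shows "emeasure (density (PiM {..<M} (\<lambda>_. lborel)) (\<lambda>x. ennreal (fr x)))
            {x \<in> space (PiM {..<M} (\<lambda>_. lborel)). order_stat M j x \<le> y}
       = ennreal (\<Sum>i\<in>MME_index L M. p i * (\<Sum>S\<in>SS M j. \<Prod>m<M. (if m \<in> S then C (i m) y else 1 - C (i m) y)))"
    and "0 \<le> (\<Sum>i\<in>MME_index L M. p i * (\<Sum>S\<in>SS M j. \<Prod>m<M. (if m \<in> S then C (i m) y else 1 - C (i m) y)))"
proof -
  let ?P = "PiM {..<M} (\<lambda>_::nat. lborel :: real measure)"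
  interpret product_sigma_finite "\<lambda>_::nat. lborel :: real measure"
    by standard
  define A where "A = {x \<in> space ?P. order_stat M j x \<le> y}"
  have Am: "A \<in> sets ?P" unfolding A_def using order_stat_measurable[OF jM] by measurable
  have idx: "i \<in> MME_index L M \<Longrightarrow> m < M \<Longrightarrow> i m < L" for i m
    unfolding MME_index_def by auto
  define g where "g = (\<lambda>x. \<Sum>i\<in>MME_index L M. p i * (\<Sum>S\<in>SS M j. \<Prod>m<M. psi S y m (x m) * d (i m) (x m)))"
  have eq: "indicator A x * fr x = g x" if x: "x \<in> space ?P" for x
  proof -
    have "indicator A x = (\<Sum>S\<in>SS M j. \<Prod>m<M. psi S y m (x m))"
      using x ind_sum[of j M x y] order_stat_le[OF jM, of x y] unfolding A_def
      by (auto simp: indicator_def split: if_splits)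
    then show ?thesis unfolding g_def fr_def
      by (simp add: sum_distrib_left sum_distrib_right prod.distrib mult_ac)
  qed
  have pint: "integrable ?P (\<lambda>x. \<Prod>m<M. psi S y m (x m) * d (i m) (x m))"
    if "i \<in> MME_index L M" for S i
    using product_integrable_prod[of "{..<M}" "\<lambda>m t. psi S y m t * d (i m) t"]
      psi_int(1)[OF dm di ii] idx[OF that] by auto
  have pval: "integral\<^sup>L ?P (\<lambda>x. \<Prod>m<M. psi S y m (x m) * d (i m) (x m))
      = (\<Prod>m<M. (if m \<in> S then C (i m) y else 1 - C (i m) y))"
    if "i \<in> MME_index L M" for S i
  proof -
    have "integral\<^sup>L ?P (\<lambda>x. \<Prod>m<M. psi S y m (x m) * d (i m) (x m))
        = (\<Prod>m<M. integral\<^sup>L lborel (\<lambda>t. psi S y m t * d (i m) t))"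
      using product_integral_prod[of "{..<M}" "\<lambda>m t. psi S y m t * d (i m) t"]
        psi_int(1)[OF dm di ii] idx[OF that] by auto
    also have "\<dots> = (\<Prod>m<M. (if m \<in> S then C (i m) y else 1 - C (i m) y))"
      using psi_int(2)[OF dm di ii] idx[OF that] d1 unfolding C_def
      by (intro prod.cong refl) auto
    finally show ?thesis .
  qed
  have gint: "integrable ?P g" unfolding g_def
    using pint by (auto intro!: integrable_sum integrable_mult_right)
  have gval: "integral\<^sup>L ?P g = (\<Sum>i\<in>MME_index L M. p i * (\<Sum>S\<in>SS M j. \<Prod>m<M. (if m \<in> S then C (i m) y else 1 - C (i m) y)))"
    unfolding g_def using pint pval
    by (simp add: integral_sum integral_mult_right integrable_sum integrable_mult_right)
  have frm: "fr \<in> borel_measurable ?P" unfolding fr_def using dm idx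
    by (auto intro!: borel_measurable_sum borel_measurable_times borel_measurable_prod
        measurable_compose[OF measurable_component_singleton])
  have iint: "integrable ?P (\<lambda>x. indicator A x * fr x)"
  proof -
    have "integrable ?P (\<lambda>x. indicator A x * fr x) = integrable ?P g"
      by (rule Bochner_Integration.integrable_cong) (auto simp: eq)
    then show ?thesis using gint by simp
  qed
  have ival: "integral\<^sup>L ?P (\<lambda>x. indicator A x * fr x) = integral\<^sup>L ?P g"
    by (rule Bochner_Integration.integral_cong) (auto simp: eq)
  have nn: "AE x in ?P. 0 \<le> indicator A x * fr x" using fr_nn by (auto simp: indicator_def)
  have "emeasure (density ?P (\<lambda>x. ennreal (fr x))) A = (\<integral>\<^sup>+x. ennreal (fr x) * indicator A x \<partial>?P)"
    using frm Am by (intro emeasure_density) auto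
  also have "\<dots> = (\<integral>\<^sup>+x. ennreal (indicator A x * fr x) \<partial>?P)"
    by (intro nn_integral_cong) (auto simp: indicator_def)
  also have "\<dots> = ennreal (integral\<^sup>L ?P (\<lambda>x. indicator A x * fr x))"
    by (rule nn_integral_eq_integral[OF iint nn])
  finally have X: "emeasure (density ?P (\<lambda>x. ennreal (fr x))) A = ennreal (integral\<^sup>L ?P (\<lambda>x. indicator A x * fr x))" .
  show "emeasure (density ?P (\<lambda>x. ennreal (fr x))) {x \<in> space ?P. order_stat M j x \<le> y}
       = ennreal (\<Sum>i\<in>MME_index L M. p i * (\<Sum>S\<in>SS M j. \<Prod>m<M. (if m \<in> S then C (i m) y else 1 - C (i m) y)))"
    using X[unfolded ival gval] unfolding A_def .
  have "0 \<le> integral\<^sup>L ?P (\<lambda>x. indicator A x * fr x)"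
    using nn by (rule integral_nonneg_AE)
  then show "0 \<le> (\<Sum>i\<in>MME_index L M. p i * (\<Sum>S\<in>SS M j. \<Prod>m<M. (if m \<in> S then C (i m) y else 1 - C (i m) y)))"
    unfolding ival gval .
qed

lemma SS_nonempty: "1 \<le> j \<Longrightarrow> S \<in> SS M j \<Longrightarrow> \<exists>m\<in>S. m < M"
  unfolding SS_def by (cases "S = {}") auto

theorem theorem5:
  fixes P :: "'a measure" and X :: "nat \<Rightarrow> 'a \<Rightarrow> real"
    and L M :: nat and F :: "nat \<Rightarrow> real \<Rightarrow> real" and p :: "(nat \<Rightarrow> nat) \<Rightarrow> real"
    and j :: nat
  assumes "prob_space P"
    and "L \<ge> 1" and "M \<ge> 1"
    and "\<And>l. l < L \<Longrightarrow> ME_density (F l)"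
    and "(\<Sum>i\<in>MME_index L M. p i) = 1"
    and "\<And>x. (\<forall>m<M. x m \<ge> 0) \<Longrightarrow> MME_fun L M F p x \<ge> 0"
    and "distributed P (PiM {..<M} (\<lambda>_. lborel)) (\<lambda>\<omega>. \<lambda>m\<in>{..<M}. X m \<omega>)
           (\<lambda>x. ennreal (if (\<forall>m<M. x m \<ge> 0) then MME_fun L M F p x else 0))"
    and "1 \<le> j" and "j \<le> M"
  shows "\<exists>h. MEam h \<and>
           distributed P lborel (\<lambda>\<omega>. order_stat M j (\<lambda>m. X m \<omega>))
             (\<lambda>y. ennreal (if y \<ge> 0 then h y else 0))"
proof -
  note ME = assms(4) and fnn = assms(6) and dist = assms(7) and jM = assms(8,9)
  interpret P: prob_space P by fact
  let ?P = "PiM {..<M} (\<lambda>_::nat. lborel :: real measure)"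
  have "\<forall>l. \<exists>fh Gf. l < L \<longrightarrow> (EF fh \<and> (\<forall>x\<ge>0. fh x = F l x) \<and> EF Gf \<and> Gf 0 = 0
          \<and> (\<forall>x. (Gf has_real_derivative fh x) (at x)))"
  proof (intro allI impI)
    fix l
    show "\<exists>fh Gf. l < L \<longrightarrow> (EF fh \<and> (\<forall>x\<ge>0. fh x = F l x) \<and> EF Gf \<and> Gf 0 = 0
          \<and> (\<forall>x. (Gf has_real_derivative fh x) (at x)))"
    proof (cases "l < L")
      case True
      obtain fh where fh: "EF fh" "\<forall>x\<ge>0. fh x = F l x" using ME_to_EF[OF ME[OF True]] by blast
      obtain Gf where "EF Gf" "Gf 0 = 0" "\<forall>x. (Gf has_real_derivative fh x) (at x)"
        using EF_antideriv[OF fh(1)] by blast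
      then show ?thesis using fh by blast
    qed auto
  qed
  then obtain Fh G where FG: "\<And>l. l < L \<Longrightarrow> EF (Fh l) \<and> (\<forall>x\<ge>0. Fh l x = F l x) \<and> EF (G l) \<and> G l 0 = 0
          \<and> (\<forall>x. (G l has_real_derivative Fh l x) (at x))"
    by metis
  define d where "d = (\<lambda>l x. if 0 \<le> x then F l x else (0::real))"
  have od: "d l \<in> borel_measurable borel \<and> (\<forall>x. d l x \<ge> 0) \<and> integrable lborel (d l)
      \<and> integral\<^sup>L lborel (d l) = 1 \<and> (\<forall>y. integrable lborel (\<lambda>x. indicator {..y} x * d l x))
      \<and> (\<forall>y. integral\<^sup>L lborel (\<lambda>x. indicator {..y} x * d l x) = (if 0 \<le> y then G l y else 0))"
    if l: "l < L" for l
  proof -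
    have a: "EF (Fh l)" "\<forall>x\<ge>0. Fh l x = F l x" "\<forall>x. (G l has_real_derivative Fh l x) (at x)" "G l 0 = 0"
      using FG[OF l] by auto
    note o = one_dim[OF ME[OF l] a(1,2) a(3,4)]
    show ?thesis using o unfolding d_def by auto
  qed
  have dm: "\<And>l. l < L \<Longrightarrow> d l \<in> borel_measurable borel"
    and dnn: "\<And>l x. l < L \<Longrightarrow> d l x \<ge> 0"
    and di: "\<And>l. l < L \<Longrightarrow> integrable lborel (d l)"
    and d1: "\<And>l. l < L \<Longrightarrow> integral\<^sup>L lborel (d l) = 1"
    and ii: "\<And>l y. l < L \<Longrightarrow> integrable lborel (\<lambda>x. indicator {..y} x * d l x)"
    and iv: "\<And>l y. l < L \<Longrightarrow> integral\<^sup>L lborel (\<lambda>x. indicator {..y} x * d l x) = (if 0 \<le> y then G l y else 0)"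
    using od by auto
  define fr where "fr = (\<lambda>x. \<Sum>i\<in>MME_index L M. p i * (\<Prod>m<M. d (i m) (x m)))"
  have idx: "i \<in> MME_index L M \<Longrightarrow> m < M \<Longrightarrow> i m < L" for i m
    unfolding MME_index_def by auto
  have fr_eq: "(if (\<forall>m<M. x m \<ge> 0) then MME_fun L M F p x else 0) = fr x" for x
  proof (cases "\<forall>m<M. x m \<ge> 0")
    case True
    then show ?thesis unfolding fr_def MME_fun_def d_def by simp
  next
    case False
    then obtain m where m: "m < M" "x m < 0" by auto
    have z: "(\<Prod>m<M. d (i m) (x m)) = 0" for i
      using m by (intro prod_zero bexI[of _ m]) (auto simp: d_def)
    have "fr x = 0" unfolding fr_def by (rule sum.neutral) (simp add: z del: prod_zero_iff)
    then show ?thesis unfolding if_not_P[OF False] by simp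
  qed
  have fr_nn: "0 \<le> fr x" for x
    using fr_eq[of x] fnn[of x] by (auto split: if_splits)
  define C where "C = (\<lambda>l y. integral\<^sup>L lborel (\<lambda>x. indicator {..y} x * d l x))"
  define Hg where "Hg = (\<lambda>y. \<Sum>i\<in>MME_index L M. p i * (\<Sum>S\<in>SS M j. \<Prod>m<M. (if m \<in> S then C (i m) y else 1 - C (i m) y)))"
  define Hh where "Hh = (\<lambda>y. \<Sum>i\<in>MME_index L M. p i * (\<Sum>S\<in>SS M j. \<Prod>m<M. (if m \<in> S then G (i m) y else 1 - G (i m) y)))"
  have cf: "emeasure (density ?P (\<lambda>x. ennreal (fr x))) {x \<in> space ?P. order_stat M j x \<le> y} = ennreal (Hg y)"
       "0 \<le> Hg y" for y
    using cdf_formula[OF jM dm di d1 ii fr_def _ C_def] fr_nn unfolding Hg_def by auto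
  have Hg_Hh: "Hg y = (if 0 \<le> y then Hh y else 0)" for y
  proof (cases "0 \<le> y")
    case True
    have Cg: "i \<in> MME_index L M \<Longrightarrow> m < M \<Longrightarrow> C (i m) y = G (i m) y" for i m
      unfolding C_def using iv idx True by simp
    show ?thesis unfolding Hg_def Hh_def using True
      apply simp
      apply (rule sum.cong[OF refl])
      apply (rule arg_cong[where f="(*) _"])
      apply (rule sum.cong[OF refl])
      apply (rule prod.cong[OF refl])
      using Cg by auto
  next
    case False
    have z: "(\<Prod>m<M. (if m \<in> S then C (i m) y else 1 - C (i m) y)) = 0"
      if iS: "i \<in> MME_index L M" "S \<in> SS M j" for i S
    proof -
      obtain m where "m \<in> S" "m < M" using SS_nonempty[OF jM(1) iS(2)] by blast
      then show ?thesis using False iv idx[OF iS(1)] unfolding C_def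
        by (intro prod_zero bexI[of _ m]) auto
    qed
    have "Hg y = 0" unfolding Hg_def
      by (intro sum.neutral ballI) (simp add: z del: prod_zero_iff)
    then show ?thesis using False by simp
  qed
  have Hh0: "Hh 0 = 0"
  proof -
    have z: "(\<Prod>m<M. (if m \<in> S then G (i m) 0 else 1 - G (i m) 0)) = 0"
      if iS: "i \<in> MME_index L M" "S \<in> SS M j" for i S
    proof -
      obtain m where "m \<in> S" "m < M" using SS_nonempty[OF jM(1) iS(2)] by blast
      then show ?thesis using FG idx[OF iS(1)]
        by (intro prod_zero bexI[of _ m]) auto
    qed
    show ?thesis unfolding Hh_def
      by (intro sum.neutral ballI) (simp add: z del: prod_zero_iff)
  qed
  have "EF Hh" unfolding Hh_def
  proof (intro EF_sum EF_scale EF_prod finite_MME_index finite_SS)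
    fix i S m assume i: "i \<in> MME_index L M" and m: "m \<in> {..<M}"
    have g: "EF (G (i m))" using FG idx[OF i] m by auto
    have "EF (\<lambda>y. 1 + (-1) * G (i m) y)" by (intro EF_add EF_const EF_scale g)
    then have "EF (\<lambda>y. 1 - G (i m) y)" by simp
    with g show "EF (\<lambda>y. if m \<in> S then G (i m) y else 1 - G (i m) y)"
      by (cases "m \<in> S") auto
  qed auto
  then obtain hh where hh: "EF hh" "\<And>x. (Hh has_real_derivative hh x) (at x)"
    using EF_deriv by blast
  define Xv where "Xv = (\<lambda>\<omega>. \<lambda>m\<in>{..<M}. X m \<omega>)"
  define Y where "Y = (\<lambda>\<omega>. order_stat M j (\<lambda>m. X m \<omega>))"
  define Q where "Q = density ?P (\<lambda>x. ennreal (fr x))"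
  have dens_eq: "(\<lambda>x. ennreal (if (\<forall>m<M. x m \<ge> 0) then MME_fun L M F p x else 0)) = (\<lambda>x. ennreal (fr x))"
    using fr_eq by simp
  have Xvm: "Xv \<in> measurable P ?P" using dist unfolding distributed_def Xv_def by simp
  have dX: "distr P ?P Xv = Q" using dist unfolding distributed_def Xv_def Q_def dens_eq by simp
  have osm: "order_stat M j \<in> measurable ?P lborel" using order_stat_measurable[OF jM] by simp
  have YXv: "Y = order_stat M j \<circ> Xv"
    unfolding Y_def Xv_def by (simp add: fun_eq_iff order_stat_restrict)
  have Ym: "Y \<in> measurable P lborel" unfolding YXv using Xvm osm by (rule measurable_comp)
  define D where "D = distr P lborel Y"
  have D_eq: "D = distr Q lborel (order_stat M j)"
    unfolding D_def YXv using distr_distr[OF osm Xvm] dX by simp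
  have cdfD: "emeasure D {..y} = ennreal (Hg y)" for y
  proof -
    have "emeasure D {..y} = emeasure Q (order_stat M j -` {..y} \<inter> space Q)"
    proof (unfold D_eq, rule emeasure_distr)
      show "order_stat M j \<in> measurable Q lborel"
        using osm by (metis Q_def measurable_cong_sets sets_density)
    qed simp
    also have "order_stat M j -` {..y} \<inter> space Q = {x \<in> space ?P. order_stat M j x \<le> y}"
      unfolding Q_def by auto
    finally show ?thesis using cf(1)[of y] unfolding Q_def by simp
  qed
  have Hh_mono: "Hh a \<le> Hh b" if ab: "0 \<le> a" "a \<le> b" for a b
  proof -
    have "emeasure D {..a} \<le> emeasure D {..b}"
      by (rule emeasure_mono) (use ab in \<open>auto simp: D_def\<close>)
    then have "Hg a \<le> Hg b" using cdfD cf(2)[of b] by (simp add: ennreal_le_iff)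
    then show ?thesis using Hg_Hh ab by simp
  qed
  have hh_nn: "0 \<le> hh x" if x: "0 \<le> x" for x
  proof (rule ccontr)
    assume "\<not> 0 \<le> hh x"
    then obtain \<delta> where \<delta>: "\<delta> > 0" "\<And>h. h > 0 \<Longrightarrow> h < \<delta> \<Longrightarrow> Hh x > Hh (x + h)"
      using DERIV_neg_dec_right[OF hh(2)[of x]] by force
    have "Hh x > Hh (x + \<delta> / 2)" using \<delta> by simp
    moreover have "Hh x \<le> Hh (x + \<delta> / 2)" using x \<delta> by (intro Hh_mono) auto
    ultimately show False by simp
  qed
  have hhm[measurable]: "hh \<in> borel_measurable borel" by (rule EF_measurable[OF hh(1)])
  define hd where "hd = (\<lambda>y. ennreal (if 0 \<le> y then hh y else 0))"
  have hdm[measurable]: "hd \<in> borel_measurable lborel" unfolding hd_def by simp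
  define N where "N = density lborel hd"
  have cdfN: "emeasure N {..y} = ennreal (Hg y)" for y
  proof (cases "0 \<le> y")
    case True
    have "emeasure N {..y} = (\<integral>\<^sup>+x. hd x * indicator {..y} x \<partial>lborel)"
      unfolding N_def by (rule emeasure_density) auto
    also have "\<dots> = (\<integral>\<^sup>+x. ennreal (hh x) * indicator {0..y} x \<partial>lborel)"
      by (intro nn_integral_cong) (auto simp: hd_def indicator_def)
    also have "\<dots> = ennreal (Hh y - Hh 0)"
    proof (rule nn_integral_has_integral_lebesgue')
      show "(hh has_integral Hh y - Hh 0) {0..y}"
        using True hh(2) by (intro fundamental_theorem_of_calculus)
          (auto simp: has_real_derivative_iff_has_vector_derivative[symmetric] intro: has_field_derivative_at_within)
    qed (use hh_nn in auto)
    finally show ?thesis using Hh0 Hg_Hh True by simp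
  next
    case False
    have "emeasure N {..y} = (\<integral>\<^sup>+x. hd x * indicator {..y} x \<partial>lborel)"
      unfolding N_def by (rule emeasure_density) auto
    moreover have "(\<lambda>x. hd x * indicator {..y} x) = (\<lambda>x. 0)"
      using False by (auto simp: hd_def indicator_def fun_eq_iff)
    ultimately show ?thesis using Hg_Hh False by simp
  qed
  have un: "(\<Union>n. {..real n}) = UNIV"
  proof -
    have "x \<in> (\<Union>n. {..real n})" for x :: real
    proof -
      obtain n where "x \<le> real n" using real_arch_simple by blast
      then show ?thesis by (simp add: UN_iff) (rule exI[of _ n])
    qed
    then show ?thesis by auto
  qed
  have inc: "incseq (\<lambda>n. {..real n})" unfolding incseq_def by (simp add: atMost_subset_iff)
  have sup: "(SUP n. emeasure K {..real n}) = emeasure K UNIV" if K: "sets K = sets borel" for K :: "real measure"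
  proof -
    have "range (\<lambda>n. {..real n}) \<subseteq> sets K" using K by (simp add: image_subset_iff)
    from SUP_emeasure_incseq[OF this inc] show ?thesis unfolding un .
  qed
  have Dprob: "prob_space D" unfolding D_def by (rule P.prob_space_distr[OF Ym])
  have D1: "emeasure D UNIV = 1"
    using prob_space.emeasure_space_1[OF Dprob] by (simp add: D_def)
  have N1: "emeasure N UNIV = 1"
  proof -
    have "emeasure N UNIV = (SUP n. emeasure N {..real n})" by (rule sup[symmetric]) (simp add: N_def)
    also have "\<dots> = (SUP n. emeasure D {..real n})" by (simp add: cdfN cdfD)
    also have "\<dots> = emeasure D UNIV" by (rule sup) (simp add: D_def)
    finally show ?thesis using D1 by simp
  qed
  have spD: "space D = UNIV" "sets D = sets borel" by (simp_all add: D_def)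
  have spN: "space N = UNIV" "sets N = sets borel" by (simp_all add: N_def)
  have fD: "finite_borel_measure D"
  proof (intro finite_borel_measure.intro finite_borel_measure_axioms.intro finite_measureI)
    show "emeasure D (space D) \<noteq> \<infinity>" using D1 spD by simp
  qed (rule spD(2))
  have fN: "finite_borel_measure N"
  proof (intro finite_borel_measure.intro finite_borel_measure_axioms.intro finite_measureI)
    show "emeasure N (space N) \<noteq> \<infinity>" using N1 spN by simp
  qed (rule spN(2))
  have "cdf D = cdf N" by (rule ext) (simp add: cdf_def2 measure_def cdfD cdfN)
  then have DN: "D = N" by (rule cdf_unique'[OF fD fN])
  have distr: "distributed P lborel Y hd"
    unfolding distributed_def using DN Ym by (simp add: D_def N_def)
  have int1: "(hh has_integral 1) {0..}"
  proof -
    have "(\<integral>\<^sup>+x. ennreal (if 0 \<le> x then hh x else 0) \<partial>lborel) = emeasure N UNIV"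
      unfolding N_def by (subst emeasure_density) (auto simp: hd_def)
    then have "((\<lambda>x. if 0 \<le> x then hh x else 0) has_integral 1) UNIV"
      using N1 hh_nn by (intro nn_integral_has_integral) auto
    then show ?thesis using has_integral_restrict_UNIV[of "{0..}" hh 1] by (simp add: atLeast_def)
  qed
  have "ME_density hh" using EF_to_ME[OF hh(1)] hh_nn int1 by auto
  then have "MEam hh" unfolding MEam_def using hh_nn
    by (intro conjI exI[of _ 1] exI[of _ "\<lambda>_. 1"] exI[of _ "\<lambda>_. hh"]) auto
  then show ?thesis using distr unfolding Y_def hd_def by blast
qed

end
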